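(* Let $1,2,3,4$ be four distinct vertices of $G$ such that $G[\{1,2,3\}]$ has edge set exactly $\{12,23\}$ and $G[\{2,3,4\}]$ has edge set exactly $\{23,34\}$ (nothing is assumed about whether $14$ is an edge). If $\Gamma_G$ is population monotonic, then $w_{23}\ge w_{12}+w_{34}$.
   Context: $G=(V,E;w)$ is a finite simple graph with edge weights $w:E\to\mathbb{R}$, $w_e>0$ for all $e\in E$; $w_{ij}$ denotes the weight of edge $ij$. The matching game on $G$ is the cooperative game $\Gamma_G=(N,\gamma)$ with player set $N=V$ and, for $S\subseteq N$, $\gamma(S)$ equal to the maximum weight of a matching in the induced subgraph $G[S]$ (so $\gamma(\emptyset)=0$). A population monotonic allocation scheme (PMAS) is a family $(\boldsymbol{x}_S)_{\emptyset\neq S\subseteq N}$ with $\boldsymbol{x}_S=(x_{S,i})_{i\in S}\in\mathbb{R}^S$ such that (efficiency) $\sum_{i\in S}x_{S,i}=\gamma(S)$ for every nonempty $S\subseteq N$, and (monotonicity) $x_{S,i}\le x_{T,i}$ whenever $\emptyset\ne S\subseteq T\subseteq N$ and $i\in S$. $\Gamma_G$ is called population monotonic if it admits a PMAS. *)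

theory Defs
  imports Complex_Main
begin

definition weighted_simple_graph :: "'a set \<Rightarrow> 'a set set \<Rightarrow> ('a set \<Rightarrow> real) \<Rightarrow> bool" where
  "weighted_simple_graph V E w \<longleftrightarrow> finite V \<and> (\<forall>e\<in>E. e \<subseteq> V \<and> card e = 2) \<and> (\<forall>e\<in>E. w e > 0)"

definition induced_edges :: "'a set set \<Rightarrow> 'a set \<Rightarrow> 'a set set" where
  "induced_edges E S = {e\<in>E. e \<subseteq> S}"

definition matching_in :: "'a set set \<Rightarrow> 'a set \<Rightarrow> 'a set set \<Rightarrow> bool" where
  "matching_in E S M \<longleftrightarrow> M \<subseteq> induced_edges E S \<and> (\<forall>e\<in>M. \<forall>f\<in>M. e \<noteq> f \<longrightarrow> e \<inter> f = {})"

definition match_value :: "'a set set \<Rightarrow> ('a set \<Rightarrow> real) \<Rightarrow> 'a set \<Rightarrow> real" where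
  "match_value E w S = Max {sum w M | M. matching_in E S M}"

definition is_PMAS :: "'a set \<Rightarrow> 'a set set \<Rightarrow> ('a set \<Rightarrow> real) \<Rightarrow> ('a set \<Rightarrow> 'a \<Rightarrow> real) \<Rightarrow> bool" where
  "is_PMAS V E w x \<longleftrightarrow>
     (\<forall>S. S \<subseteq> V \<and> S \<noteq> {} \<longrightarrow> (\<Sum>i\<in>S. x S i) = match_value E w S) \<and>
     (\<forall>S T i. S \<noteq> {} \<and> S \<subseteq> T \<and> T \<subseteq> V \<and> i \<in> S \<longrightarrow> x S i \<le> x T i)"

definition population_monotonic :: "'a set \<Rightarrow> 'a set set \<Rightarrow> ('a set \<Rightarrow> real) \<Rightarrow> bool" where
  "population_monotonic V E w \<longleftrightarrow> (\<exists>x. is_PMAS V E w x)"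

end

theory Submission
  imports Defs
begin

lemma mv_finite:
  assumes "finite E"
  shows "finite {sum w M | M. matching_in E S M}"
proof -
  have "{sum w M | M. matching_in E S M} \<subseteq> sum w ` Pow E"
    by (auto simp: matching_in_def induced_edges_def)
  thus ?thesis using assms finite_subset by blast
qed

lemma mv_ge:
  assumes "finite E" "matching_in E S M"
  shows "sum w M \<le> match_value E w S"
  unfolding match_value_def using assms mv_finite[OF assms(1)]
  by (intro Max_ge) auto

lemma mv_le:
  assumes "finite E" "\<And>M. matching_in E S M \<Longrightarrow> sum w M \<le> B"
  shows "match_value E w S \<le> B"
proof -
  have "matching_in E S {}" by (simp add: matching_in_def)
  thus ?thesis unfolding match_value_def using assms mv_finite[OF assms(1)]
    by (subst Max_le_iff) auto
qed

lemma path_le: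
  fixes w :: "'a set \<Rightarrow> real"
  assumes "induced_edges E S = {A, B}" "A \<noteq> B" "A \<inter> B \<noteq> {}"
    "w A > 0" "w B > 0" "matching_in E S M"
  shows "sum w M \<le> max (w A) (w B)"
proof -
  have sub: "M \<subseteq> {A, B}" using assms(1,6) by (simp add: matching_in_def)
  have "\<not> (A \<in> M \<and> B \<in> M)" using assms(2,3,6) by (auto simp: matching_in_def)
  with sub have "M = {} \<or> M = {A} \<or> M = {B}" by blast
  moreover have "w A \<le> max (w A) (w B)" by (rule max.cobounded1)
  moreover have "w B \<le> max (w A) (w B)" by (rule max.cobounded2)
  moreover have "0 \<le> max (w A) (w B)" using assms(4) max.cobounded1[of "w A" "w B"] by linarith
  ultimately show ?thesis by (elim disjE) simp_all
qed

lemma edge_match: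
  assumes "e \<in> E" "e \<subseteq> S"
  shows "matching_in E S {e}"
  using assms by (auto simp: matching_in_def induced_edges_def)

theorem mainTheorem2:
  fixes V :: "'a set" and E :: "'a set set" and w :: "'a set \<Rightarrow> real"
    and v1 v2 v3 v4 :: 'a
  assumes G: "weighted_simple_graph V E w"
    and verts: "v1 \<in> V" "v2 \<in> V" "v3 \<in> V" "v4 \<in> V"
    and dist: "distinct [v1, v2, v3, v4]"
    and tri1: "induced_edges E {v1, v2, v3} = {{v1, v2}, {v2, v3}}"
    and tri2: "induced_edges E {v2, v3, v4} = {{v2, v3}, {v3, v4}}"
    and pm: "population_monotonic V E w"
  shows "w {v2, v3} \<ge> w {v1, v2} + w {v3, v4}"
proof -
  obtain x where x: "is_PMAS V E w x" using pm population_monotonic_def by blast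
  have eff: "\<And>S. S \<subseteq> V \<Longrightarrow> S \<noteq> {} \<Longrightarrow> (\<Sum>i\<in>S. x S i) = match_value E w S"
    using x by (simp add: is_PMAS_def)
  have mon: "\<And>S T i. S \<noteq> {} \<Longrightarrow> S \<subseteq> T \<Longrightarrow> T \<subseteq> V \<Longrightarrow> i \<in> S \<Longrightarrow> x S i \<le> x T i"
    using x by (simp add: is_PMAS_def)
  have finE: "finite E"
  proof -
    have "E \<subseteq> Pow V" using G by (auto simp: weighted_simple_graph_def)
    thus ?thesis using G finite_subset by (auto simp: weighted_simple_graph_def)
  qed
  have e12: "{v1,v2} \<in> E" using tri1 by (auto simp: induced_edges_def)
  have e23: "{v2,v3} \<in> E" using tri1 by (auto simp: induced_edges_def)
  have e34: "{v3,v4} \<in> E" using tri2 by (auto simp: induced_edges_def)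
  define a where "a = w {v1,v2}"
  define b where "b = w {v2,v3}"
  define c where "c = w {v3,v4}"
  have pos: "a > 0" "b > 0" "c > 0" using G e12 e23 e34
    by (auto simp: weighted_simple_graph_def a_def b_def c_def)
  have d: "v1 \<noteq> v2" "v1 \<noteq> v3" "v1 \<noteq> v4" "v2 \<noteq> v3" "v2 \<noteq> v4" "v3 \<noteq> v4"
    using dist by auto
  have m12: "a \<le> match_value E w {v1,v2}"
    using mv_ge[OF finE edge_match[OF e12]] by (simp add: a_def)
  have m23: "b \<le> match_value E w {v2,v3}"
    using mv_ge[OF finE edge_match[OF e23]] by (simp add: b_def)
  have m34: "c \<le> match_value E w {v3,v4}"
    using mv_ge[OF finE edge_match[OF e34]] by (simp add: c_def)
  have neq1: "{v1,v2} \<noteq> {v2,v3}" using d by (auto simp: doubleton_eq_iff)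
  have neq2: "{v2,v3} \<noteq> {v3,v4}" using d by (auto simp: doubleton_eq_iff)
  have m123: "match_value E w {v1,v2,v3} \<le> max a b"
  proof (rule mv_le[OF finE])
    fix M assume "matching_in E {v1,v2,v3} M"
    from path_le[OF tri1 neq1 _ _ _ this] pos show "sum w M \<le> max a b"
      unfolding a_def b_def by blast
  qed
  have m234: "match_value E w {v2,v3,v4} \<le> max b c"
  proof (rule mv_le[OF finE])
    fix M assume "matching_in E {v2,v3,v4} M"
    from path_le[OF tri2 neq2 _ _ _ this] pos show "sum w M \<le> max b c"
      unfolding c_def b_def by blast
  qed
  have s12: "x {v1,v2} v1 + x {v1,v2} v2 \<ge> a" using eff[of "{v1,v2}"] m12 verts d by simp
  have s23: "x {v2,v3} v2 + x {v2,v3} v3 \<ge> b" using eff[of "{v2,v3}"] m23 verts d by simp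
  have s34: "x {v3,v4} v3 + x {v3,v4} v4 \<ge> c" using eff[of "{v3,v4}"] m34 verts d by simp
  have s123: "x {v1,v2,v3} v1 + x {v1,v2,v3} v2 + x {v1,v2,v3} v3 \<le> max a b"
    using eff[of "{v1,v2,v3}"] m123 verts d by simp
  have s234: "x {v2,v3,v4} v2 + x {v2,v3,v4} v3 + x {v2,v3,v4} v4 \<le> max b c"
    using eff[of "{v2,v3,v4}"] m234 verts d by simp
  have "x {v1,v2} v1 \<le> x {v1,v2,v3} v1" by (rule mon) (use verts in auto)
  moreover have "x {v1,v2} v2 \<le> x {v1,v2,v3} v2" by (rule mon) (use verts in auto)
  moreover have "x {v2,v3} v3 \<le> x {v1,v2,v3} v3" by (rule mon) (use verts in auto)
  moreover have "x {v3,v4} v3 \<le> x {v2,v3,v4} v3" by (rule mon) (use verts in auto)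
  moreover have "x {v3,v4} v4 \<le> x {v2,v3,v4} v4" by (rule mon) (use verts in auto)
  moreover have "x {v2,v3} v2 \<le> x {v2,v3,v4} v2" by (rule mon) (use verts in auto)
  note calc = calculation this
  have "a + c \<le> b"
  proof -
    note facts = calc s12 s23 s34 s123 s234 pos
    consider "a \<le> b" "c \<le> b" | "\<not> a \<le> b" | "\<not> c \<le> b" by blast
    then show ?thesis
    proof cases
      case 1 then have "max a b = b" "max b c = b" by auto
      with facts show ?thesis by linarith
    next
      case 2 then have "max a b = a" "max b c \<le> b + c" using pos by auto
      with facts show ?thesis by linarith
    next
      case 3 then have "max b c = c" "max a b \<le> a + b" using pos by auto
      with facts show ?thesis by linarith
    qed
  qed
  thus ?thesis by (simp add: a_def b_def c_def)
qed

end
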